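(* Let $\Gamma$ be a countable discrete sofic group with an ergodic sofic approximation $\Sigma$. If $\Gamma\curvearrowright(X,\mu)$ is a non-ergodic probability measure-preserving action on a standard probability space, then $h_{\Sigma,\mu}(X,\Gamma)=-\infty$.
   Context: $u_d$ is the uniform probability measure on $\{1,\dots,d\}$. A sofic approximation $\Sigma=(\sigma_i\colon\Gamma\to S_{d_i})$ satisfies $u_{d_i}(\{k:\sigma_i(g)\sigma_i(h)(k)=\sigma_i(gh)(k)\})\to1$ for all $g,h$ and $u_{d_i}(\{k:\sigma_i(g)(k)\ne\sigma_i(h)(k)\})\to1$ for $g\ne h$. It is ergodic if whenever $A_i\subseteq\{1,\dots,d_i\}$ satisfy $u_{d_i}(A_i\,\triangle\,\sigma_i(g)A_i)\to0$ for all $g\in\Gamma$, then $u_{d_i}(A_i)(1-u_{d_i}(A_i))\to0$. $h_{\Sigma,\mu}(X,\Gamma)\in\{-\infty\}\cup[0,\infty]$ denotes the sofic entropy (Bowen, Kerr–Li) with respect to $\Sigma$. *)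

theory Defs
  imports "HOL-Probability.Probability" "HOL-Algebra.Group" "HOL-Combinatorics.Permutations"
begin

definition unif :: "nat \<Rightarrow> nat set \<Rightarrow> real" where
  "unif d A = real (card (A \<inter> {1..d})) / real d"

definition symdiff :: "'x set \<Rightarrow> 'x set \<Rightarrow> 'x set" where
  "symdiff A B = (A - B) \<union> (B - A)"

definition sofic_approx ::
  "'g monoid \<Rightarrow> (nat \<Rightarrow> nat) \<Rightarrow> (nat \<Rightarrow> 'g \<Rightarrow> nat \<Rightarrow> nat) \<Rightarrow> bool" where
  "sofic_approx G d \<sigma> \<longleftrightarrow>
     (\<forall>i. 0 < d i) \<and>
     (\<forall>i. \<forall>g\<in>carrier G. \<sigma> i g permutes {1..d i}) \<and>
     (\<forall>g\<in>carrier G. \<forall>h\<in>carrier G.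
        (\<lambda>i. unif (d i) {k. \<sigma> i g (\<sigma> i h k) = \<sigma> i (g \<otimes>\<^bsub>G\<^esub> h) k}) \<longlonglongrightarrow> 1) \<and>
     (\<forall>g\<in>carrier G. \<forall>h\<in>carrier G. g \<noteq> h \<longrightarrow>
        (\<lambda>i. unif (d i) {k. \<sigma> i g k \<noteq> \<sigma> i h k}) \<longlonglongrightarrow> 1)"

definition ergodic_sofic_approx ::
  "'g monoid \<Rightarrow> (nat \<Rightarrow> nat) \<Rightarrow> (nat \<Rightarrow> 'g \<Rightarrow> nat \<Rightarrow> nat) \<Rightarrow> bool" where
  "ergodic_sofic_approx G d \<sigma> \<longleftrightarrow> sofic_approx G d \<sigma> \<and>
     (\<forall>A :: nat \<Rightarrow> nat set. (\<forall>i. A i \<subseteq> {1..d i}) \<longrightarrow>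
        (\<forall>g\<in>carrier G. (\<lambda>i. unif (d i) (symdiff (A i) (\<sigma> i g ` A i))) \<longlonglongrightarrow> 0) \<longrightarrow>
        (\<lambda>i. unif (d i) (A i) * (1 - unif (d i) (A i))) \<longlonglongrightarrow> 0)"

definition pmp_action :: "'g monoid \<Rightarrow> 'a measure \<Rightarrow> ('g \<Rightarrow> 'a \<Rightarrow> 'a) \<Rightarrow> bool" where
  "pmp_action G M T \<longleftrightarrow> group G \<and> prob_space M \<and>
     (\<forall>g\<in>carrier G. T g \<in> measurable M M \<and> distr M M (T g) = M) \<and>
     (\<forall>x\<in>space M. T \<one>\<^bsub>G\<^esub> x = x) \<and>
     (\<forall>g\<in>carrier G. \<forall>h\<in>carrier G. \<forall>x\<in>space M. T (g \<otimes>\<^bsub>G\<^esub> h) x = T g (T h x))"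

definition ergodic_action :: "'g monoid \<Rightarrow> 'a measure \<Rightarrow> ('g \<Rightarrow> 'a \<Rightarrow> 'a) \<Rightarrow> bool" where
  "ergodic_action G M T \<longleftrightarrow>
     (\<forall>A\<in>sets M. (\<forall>g\<in>carrier G. T g -` A \<inter> space M = A) \<longrightarrow>
        measure M A = 0 \<or> measure M A = 1)"

definition finite_meas_partition :: "'a measure \<Rightarrow> 'a set set \<Rightarrow> bool" where
  "finite_meas_partition M P \<longleftrightarrow>
     finite P \<and> P \<subseteq> sets M \<and> disjoint P \<and> \<Union>P = space M \<and> {} \<notin> P"

definition refines :: "'a set set \<Rightarrow> 'a set set \<Rightarrow> bool" where
  "refines \<eta> \<xi> \<longleftrightarrow> (\<forall>B\<in>\<eta>. \<exists>A\<in>\<xi>. B \<subseteq> A)"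

definition join_part ::
  "'a measure \<Rightarrow> ('g \<Rightarrow> 'a \<Rightarrow> 'a) \<Rightarrow> 'a set set \<Rightarrow> 'g set \<Rightarrow> 'a set set" where
  "join_part M T P F =
     {(\<Inter>s\<in>F. T s -` c s \<inter> space M) | c. \<forall>s\<in>F. c s \<in> P} - {{}}"

definition alg :: "'a set set \<Rightarrow> 'a set set" where
  "alg Q = {\<Union>S | S. S \<subseteq> Q}"

definition is_bool_hom :: "'a measure \<Rightarrow> nat \<Rightarrow> 'a set set \<Rightarrow> ('a set \<Rightarrow> nat set) \<Rightarrow> bool" where
  "is_bool_hom M d Q \<phi> \<longleftrightarrow>
     \<phi> (space M) = {1..d} \<and>
     (\<forall>A\<in>alg Q. \<phi> (space M - A) = {1..d} - \<phi> A) \<and>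
     (\<forall>A\<in>alg Q. \<forall>B\<in>alg Q. \<phi> (A \<union> B) = \<phi> A \<union> \<phi> B)"

definition Hom_mu ::
  "'a measure \<Rightarrow> ('g \<Rightarrow> 'a \<Rightarrow> 'a) \<Rightarrow> 'a set set \<Rightarrow> 'g set \<Rightarrow> real \<Rightarrow> nat \<Rightarrow> ('g \<Rightarrow> nat \<Rightarrow> nat)
     \<Rightarrow> ('a set \<Rightarrow> nat set) set" where
  "Hom_mu M T \<xi> F \<delta> d s =
     {\<phi>. is_bool_hom M d (join_part M T \<xi> F) \<phi> \<and>
       (\<forall>g\<in>F. (\<Sum>A\<in>\<xi>. unif d (symdiff (s g -` \<phi> A \<inter> {1..d}) (\<phi> (T g -` A \<inter> space M)))) < \<delta>) \<and>
       (\<Sum>A\<in>join_part M T \<xi> F. \<bar>unif d (\<phi> A) - measure M A\<bar>) < \<delta>}"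

definition hom_count ::
  "'a measure \<Rightarrow> ('g \<Rightarrow> 'a \<Rightarrow> 'a) \<Rightarrow> 'a set set \<Rightarrow> 'a set set \<Rightarrow> 'g set \<Rightarrow> real \<Rightarrow> nat
     \<Rightarrow> ('g \<Rightarrow> nat \<Rightarrow> nat) \<Rightarrow> nat" where
  "hom_count M T \<xi> \<eta> F \<delta> d s = card ((\<lambda>\<phi>. restrict \<phi> (alg \<xi>)) ` Hom_mu M T \<eta> F \<delta> d s)"

definition log_rate :: "nat \<Rightarrow> nat \<Rightarrow> ereal" where
  "log_rate d N = (if N = 0 then -\<infinity> else ereal (ln (real N) / real d))"

definition sofic_entropy ::
  "'g monoid \<Rightarrow> 'a measure \<Rightarrow> ('g \<Rightarrow> 'a \<Rightarrow> 'a) \<Rightarrow> (nat \<Rightarrow> nat) \<Rightarrow> (nat \<Rightarrow> 'g \<Rightarrow> nat \<Rightarrow> nat) \<Rightarrow> ereal" where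
  "sofic_entropy G M T d \<sigma> =
     (SUP \<xi>\<in>{\<xi>. finite_meas_partition M \<xi>}.
       INF \<eta>\<in>{\<eta>. finite_meas_partition M \<eta> \<and> refines \<eta> \<xi>}.
         INF F\<in>{F. finite F \<and> F \<subseteq> carrier G \<and> \<one>\<^bsub>G\<^esub> \<in> F}.
           INF \<delta>\<in>{0<..}.
             limsup (\<lambda>i. log_rate (d i) (hom_count M T \<xi> \<eta> F \<delta> (d i) (\<sigma> i))))"

end

theory Submission
  imports Defs
begin

lemma symdiff_UN: "symdiff (\<Union>i\<in>I. f i) (\<Union>i\<in>I. h i) \<subseteq> (\<Union>i\<in>I. symdiff (f i) (h i))"
  unfolding symdiff_def by blast

lemma unif_int: "unif d X = unif d (X \<inter> {1..d})"
  unfolding unif_def by (simp add: Int_assoc)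

lemma unif_mono: "X \<subseteq> Y \<Longrightarrow> unif d X \<le> unif d Y"
  unfolding unif_def by (intro divide_right_mono) (auto intro!: card_mono)

lemma unif_nonneg: "unif d X \<ge> 0"
  unfolding unif_def by simp

lemma unif_UN: "finite S \<Longrightarrow> unif d (\<Union>x\<in>S. f x) \<le> (\<Sum>x\<in>S. unif d (f x))"
proof -
  assume S: "finite S"
  have "card ((\<Union>x\<in>S. f x) \<inter> {1..d}) = card (\<Union>x\<in>S. f x \<inter> {1..d})" by (simp add: Int_UN_distrib2)
  also have "\<dots> \<le> (\<Sum>x\<in>S. card (f x \<inter> {1..d}))" using S by (rule card_UN_le)
  finally have "real (card ((\<Union>x\<in>S. f x) \<inter> {1..d})) \<le> (\<Sum>x\<in>S. real (card (f x \<inter> {1..d})))"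
    by (metis of_nat_le_iff of_nat_sum)
  then show ?thesis unfolding unif_def sum_divide_distrib[symmetric] by (intro divide_right_mono) auto
qed

lemma unif_compl: "0 < d \<Longrightarrow> unif d ({1..d} - X) = 1 - unif d X"
proof -
  assume d: "0 < d"
  have "({1..d} - X) \<inter> {1..d} = {1..d} - (X \<inter> {1..d})" by blast
  then have "card (({1..d} - X) \<inter> {1..d}) = d - card (X \<inter> {1..d})"
    by (simp add: card_Diff_subset)
  moreover have "card (X \<inter> {1..d}) \<le> d" by (metis card_atLeastAtMost card_mono diff_Suc_1 finite_atLeastAtMost inf_le2)
  ultimately show ?thesis unfolding unif_def using d by (simp add: of_nat_diff field_simps)
qed

lemma card_perm_preimage:
  assumes p: "p permutes {1..d}" and S: "S \<subseteq> {1..d}"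
  shows "card (p -` S \<inter> {1..d}) = card S"
proof -
  have "bij_betw p (p -` S \<inter> {1..d}) S"
    unfolding bij_betw_def
  proof
    show "inj_on p (p -` S \<inter> {1..d})" using permutes_inj[OF p] by (metis inj_on_subset subset_UNIV)
    show "p ` (p -` S \<inter> {1..d}) = S"
    proof
      show "S \<subseteq> p ` (p -` S \<inter> {1..d})"
      proof
        fix y assume y: "y \<in> S"
        then have "y \<in> p ` {1..d}" using S permutes_image[OF p] by blast
        then obtain x where "x \<in> {1..d}" "y = p x" by blast
        then show "y \<in> p ` (p -` S \<inter> {1..d})" using y by blast
      qed
    qed blast
  qed
  then show ?thesis by (rule bij_betw_same_card)
qed


locale jsetup =
  fixes M :: "'a measure" and T :: "'g \<Rightarrow> 'a \<Rightarrow> 'a" and \<eta> :: "'a set set" and F :: "'g set"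
  assumes fp: "finite_meas_partition M \<eta>"
    and finF: "finite F" and neF: "F \<noteq> {}"
    and measT: "\<And>s. s \<in> F \<Longrightarrow> T s \<in> measurable M M"
begin

abbreviation "J \<equiv> join_part M T \<eta> F"

lemma eta_props: "finite \<eta>" "\<eta> \<subseteq> sets M" "disjoint \<eta>" "\<Union>\<eta> = space M" "{} \<notin> \<eta>"
  using fp unfolding finite_meas_partition_def by auto

lemma J_cell: "C \<in> J \<Longrightarrow> \<exists>c. (\<forall>s\<in>F. c s \<in> \<eta>) \<and> C = (\<Inter>s\<in>F. T s -` c s \<inter> space M) \<and> C \<noteq> {}"
  unfolding join_part_def by blast

lemma J_sub: "C \<in> J \<Longrightarrow> C \<subseteq> space M"
  using J_cell neF by blast

lemma J_sets: "C \<in> J \<Longrightarrow> C \<in> sets M"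
proof -
  assume "C \<in> J"
  then obtain c where c: "\<forall>s\<in>F. c s \<in> \<eta>" "C = (\<Inter>s\<in>F. T s -` c s \<inter> space M)" using J_cell by blast
  have "(\<Inter>s\<in>F. T s -` c s \<inter> space M) \<in> sets M"
    using finF neF c(1) eta_props(2) measT by (intro sets.finite_INT) (auto intro: measurable_sets)
  then show ?thesis using c by simp
qed

lemma J_cover: "x \<in> space M \<Longrightarrow> \<exists>C\<in>J. x \<in> C"
proof -
  assume x: "x \<in> space M"
  define c where "c s = (SOME B. B \<in> \<eta> \<and> T s x \<in> B)" for s
  have c: "c s \<in> \<eta> \<and> T s x \<in> c s" if "s \<in> F" for s
  proof -
    have "T s x \<in> space M" using measT[OF that] x by (meson measurable_space)
    then have "\<exists>B. B \<in> \<eta> \<and> T s x \<in> B" using eta_props(4) by blast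
    then show ?thesis unfolding c_def by (rule someI_ex)
  qed
  let ?C = "\<Inter>s\<in>F. T s -` c s \<inter> space M"
  have "x \<in> ?C" using c x by auto
  moreover have "?C \<in> J" unfolding join_part_def using c \<open>x \<in> ?C\<close> by blast
  ultimately show ?thesis by blast
qed

lemma J_sat:
  assumes C: "C \<in> J" and t: "t \<in> F" and sat: "\<forall>B\<in>\<eta>. B \<subseteq> B' \<or> B \<inter> B' = {}"
  shows "C \<subseteq> T t -` B' \<inter> space M \<or> C \<inter> T t -` B' = {}"
proof -
  obtain c where c: "\<forall>s\<in>F. c s \<in> \<eta>" "C = (\<Inter>s\<in>F. T s -` c s \<inter> space M)" using J_cell C by blast
  have Ct: "C \<subseteq> T t -` c t \<inter> space M" using c t by blast
  from sat c t have "c t \<subseteq> B' \<or> c t \<inter> B' = {}" by blast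
  then show ?thesis using Ct by blast
qed

lemma J_disj: "C1 \<in> J \<Longrightarrow> C2 \<in> J \<Longrightarrow> C1 \<noteq> C2 \<Longrightarrow> C1 \<inter> C2 = {}"
proof (rule ccontr)
  assume C1: "C1 \<in> J" and C2: "C2 \<in> J" and ne: "C1 \<noteq> C2" and int: "C1 \<inter> C2 \<noteq> {}"
  obtain c where c: "\<forall>s\<in>F. c s \<in> \<eta>" "C1 = (\<Inter>s\<in>F. T s -` c s \<inter> space M)" using J_cell C1 by blast
  obtain c' where c': "\<forall>s\<in>F. c' s \<in> \<eta>" "C2 = (\<Inter>s\<in>F. T s -` c' s \<inter> space M)" using J_cell C2 by blast
  from int obtain x where x: "x \<in> C1" "x \<in> C2" by blast
  have "c s = c' s" if s: "s \<in> F" for s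
  proof -
    have "T s x \<in> c s" "T s x \<in> c' s" using x c c' s by blast+
    moreover have "c s \<in> \<eta>" "c' s \<in> \<eta>" using c c' s by auto
    ultimately show ?thesis using eta_props(3) unfolding disjoint_def disjnt_def by blast
  qed
  then have "C1 = C2" using c c' by (metis (no_types, lifting) INF_cong)
  then show False using ne by simp
qed

lemma J_finite: "finite J"
proof -
  have "J \<subseteq> (\<lambda>c. \<Inter>s\<in>F. T s -` c s \<inter> space M) ` (PiE F (\<lambda>_. \<eta>))"
  proof
    fix C assume "C \<in> J"
    then obtain c where c: "\<forall>s\<in>F. c s \<in> \<eta>" "C = (\<Inter>s\<in>F. T s -` c s \<inter> space M)" using J_cell by blast
    have "restrict c F \<in> PiE F (\<lambda>_. \<eta>)" using c by auto
    moreover have "C = (\<Inter>s\<in>F. T s -` restrict c F s \<inter> space M)" using c by auto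
    ultimately show "C \<in> (\<lambda>c. \<Inter>s\<in>F. T s -` c s \<inter> space M) ` (PiE F (\<lambda>_. \<eta>))" by blast
  qed
  moreover have "finite (PiE F (\<lambda>_. \<eta>))" by (intro finite_PiE finF eta_props(1))
  ultimately show ?thesis by (meson finite_imageI finite_subset)
qed

lemma J_union:
  assumes "S \<subseteq> space M" "\<forall>C\<in>J. C \<subseteq> S \<or> C \<inter> S = {}"
  shows "S = \<Union>{C\<in>J. C \<subseteq> S}" and "S \<in> alg J"
proof -
  show eq: "S = \<Union>{C\<in>J. C \<subseteq> S}"
  proof
    show "S \<subseteq> \<Union>{C\<in>J. C \<subseteq> S}"
    proof
      fix x assume "x \<in> S"
      then obtain C where "C \<in> J" "x \<in> C" using J_cover assms(1) by blast
      then show "x \<in> \<Union>{C\<in>J. C \<subseteq> S}" using assms(2) \<open>x \<in> S\<close> by blast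
    qed
  qed blast
  show "S \<in> alg J" unfolding alg_def using eq by blast
qed

lemma space_alg: "space M \<in> alg J"
  using J_union(2)[of "space M"] J_sub by blast

lemma alg_Un: "X \<in> alg Q \<Longrightarrow> Y \<in> alg Q \<Longrightarrow> X \<union> Y \<in> alg Q"
proof -
  assume "X \<in> alg Q" "Y \<in> alg Q"
  then obtain S1 S2 where "S1 \<subseteq> Q" "X = \<Union>S1" "S2 \<subseteq> Q" "Y = \<Union>S2" unfolding alg_def by blast
  then have "S1 \<union> S2 \<subseteq> Q" "X \<union> Y = \<Union>(S1 \<union> S2)" by auto
  then show ?thesis unfolding alg_def by blast
qed

lemma hom_empty: "is_bool_hom M d J \<phi> \<Longrightarrow> \<phi> {} = {}"
  using space_alg unfolding is_bool_hom_def by (metis Diff_cancel)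

lemma hom_UN:
  assumes h: "is_bool_hom M d J \<phi>" and S: "finite S" "S \<subseteq> alg J"
  shows "\<phi> (\<Union>S) = (\<Union>X\<in>S. \<phi> X)" and "\<Union>S \<in> alg J"
proof -
  have "\<phi> (\<Union>S) = (\<Union>X\<in>S. \<phi> X) \<and> \<Union>S \<in> alg J" using S
  proof (induction S rule: finite_induct)
    case empty
    then show ?case using hom_empty[OF h] unfolding alg_def by auto
  next
    case (insert X S)
    then have X: "X \<in> alg J" and IH: "\<phi> (\<Union>S) = (\<Union>X\<in>S. \<phi> X)" "\<Union>S \<in> alg J" by auto
    have "\<phi> (\<Union>(insert X S)) = \<phi> (X \<union> \<Union>S)" by simp
    also have "\<dots> = \<phi> X \<union> \<phi> (\<Union>S)" using h X IH(2) unfolding is_bool_hom_def by blast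
    finally show ?case using IH alg_Un[OF X IH(2)] by simp
  qed
  then show "\<phi> (\<Union>S) = (\<Union>X\<in>S. \<phi> X)" and "\<Union>S \<in> alg J" by auto
qed

end

locale jinv = jsetup +
  fixes A and e
  assumes A_sets: "A \<in> sets M"
    and A_inv: "\<And>g. g \<in> F \<Longrightarrow> T g -` A \<inter> space M = A"
    and sat: "\<And>B. B \<in> \<eta> \<Longrightarrow> B \<subseteq> A \<or> B \<inter> A = {}"
    and eF: "e \<in> F" and Te: "\<And>x. x \<in> space M \<Longrightarrow> T e x = x"
begin

lemma A_sub: "A \<subseteq> space M" using A_sets sets.sets_into_space by blast

lemma cell_A: "C \<in> J \<Longrightarrow> C \<subseteq> A \<or> C \<inter> A = {}"
proof -
  assume C: "C \<in> J"
  have satA: "\<forall>B\<in>\<eta>. B \<subseteq> A \<or> B \<inter> A = {}" using sat by blast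
  have d: "C \<subseteq> T e -` A \<inter> space M \<or> C \<inter> T e -` A = {}"
    by (rule J_sat[OF C eF satA])
  have eq: "T e -` A \<inter> space M = A" by (rule A_inv[OF eF])
  have Cs: "C \<subseteq> space M" by (rule J_sub[OF C])
  show ?thesis
  proof (cases "C \<subseteq> T e -` A \<inter> space M")
    case True then show ?thesis using eq by simp
  next
    case False
    then have "C \<inter> T e -` A = {}" using d by blast
    then have "C \<inter> (T e -` A \<inter> space M) = {}" by blast
    then show ?thesis using eq by simp
  qed
qed

lemma A_alg: "A \<in> alg J" "A = \<Union>{C\<in>J. C \<subseteq> A}"
proof -
  have "\<forall>C\<in>J. C \<subseteq> A \<or> C \<inter> A = {}" using cell_A by blast
  then show "A \<in> alg J" "A = \<Union>{C\<in>J. C \<subseteq> A}" using J_union[OF A_sub] by blast+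
qed

lemma cA_alg: "space M - A \<in> alg J" "space M - A = \<Union>{C\<in>J. C \<subseteq> space M - A}"
proof -
  have "\<forall>C\<in>J. C \<subseteq> space M - A \<or> C \<inter> (space M - A) = {}"
    using cell_A J_sub by blast
  moreover have "space M - A \<subseteq> space M" by blast
  ultimately show "space M - A \<in> alg J" "space M - A = \<Union>{C\<in>J. C \<subseteq> space M - A}"
    using J_union[of "space M - A"] by blast+
qed

lemma pre_alg: "B \<in> \<eta> \<Longrightarrow> g \<in> F \<Longrightarrow> T g -` B \<inter> space M \<in> alg J"
proof -
  assume B: "B \<in> \<eta>" and g: "g \<in> F"
  have satB: "\<forall>B'\<in>\<eta>. B' \<subseteq> B \<or> B' \<inter> B = {}"
    using eta_props(3) B unfolding disjoint_def disjnt_def by blast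
  have "\<forall>C\<in>J. C \<subseteq> T g -` B \<inter> space M \<or> C \<inter> (T g -` B \<inter> space M) = {}"
    using J_sat[OF _ g satB] by blast
  moreover have "T g -` B \<inter> space M \<subseteq> space M" by blast
  ultimately show ?thesis using J_union(2)[of "T g -` B \<inter> space M"] by blast
qed

lemma eta_alg: "B \<in> \<eta> \<Longrightarrow> B \<in> alg J"
proof -
  assume B: "B \<in> \<eta>"
  have "B \<subseteq> space M" using B eta_props(2) sets.sets_into_space by blast
  then have "T e -` B \<inter> space M = B" using Te by force
  then show ?thesis using pre_alg[OF B eF] by simp
qed

lemma Hom_bool: "\<phi> \<in> Hom_mu M T \<eta> F \<delta> d p \<Longrightarrow> is_bool_hom M d J \<phi>"
  unfolding Hom_mu_def by blast

lemma unif_le_meas: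
  assumes h: "\<phi> \<in> Hom_mu M T \<eta> F \<delta> d p" and pM: "prob_space M"
    and S: "S \<subseteq> space M" "\<forall>C\<in>J. C \<subseteq> S \<or> C \<inter> S = {}"
  shows "unif d (\<phi> S) < measure M S + \<delta>"
proof -
  interpret prob_space M by (rule pM)
  have hb: "is_bool_hom M d J \<phi>" by (rule Hom_bool[OF h])
  have hm: "(\<Sum>C\<in>J. \<bar>unif d (\<phi> C) - measure M C\<bar>) < \<delta>" using h unfolding Hom_mu_def by blast
  define JS where "JS = {C\<in>J. C \<subseteq> S}"
  have finJS: "finite JS" unfolding JS_def using J_finite by simp
  have JSalg: "JS \<subseteq> alg J" unfolding JS_def alg_def by blast
  have SU: "S = \<Union>JS" unfolding JS_def by (rule J_union(1)[OF S])
  have "\<phi> S = (\<Union>C\<in>JS. \<phi> C)" using hom_UN(1)[OF hb finJS JSalg] SU by simp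
  then have "unif d (\<phi> S) \<le> (\<Sum>C\<in>JS. unif d (\<phi> C))" using unif_UN[OF finJS] by simp
  also have "\<dots> \<le> (\<Sum>C\<in>JS. measure M C + \<bar>unif d (\<phi> C) - measure M C\<bar>)"
    by (intro sum_mono) linarith
  also have "\<dots> = (\<Sum>C\<in>JS. measure M C) + (\<Sum>C\<in>JS. \<bar>unif d (\<phi> C) - measure M C\<bar>)"
    by (rule sum.distrib)
  also have "(\<Sum>C\<in>JS. measure M C) = measure M S"
  proof -
    have "measure M (\<Union>C\<in>JS. id C) = (\<Sum>C\<in>JS. measure M (id C))"
    proof (rule measure_finite_Union[OF finJS])
      show "id ` JS \<subseteq> sets M" unfolding JS_def using J_sets by auto
      show "disjoint_family_on id JS" unfolding disjoint_family_on_def JS_def using J_disj by auto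
      show "\<And>i. i \<in> JS \<Longrightarrow> emeasure M (id i) \<noteq> \<infinity>" using emeasure_finite by simp
    qed
    then show ?thesis using SU by simp
  qed
  also have "(\<Sum>C\<in>JS. \<bar>unif d (\<phi> C) - measure M C\<bar>) \<le> (\<Sum>C\<in>J. \<bar>unif d (\<phi> C) - measure M C\<bar>)"
    using J_finite unfolding JS_def by (intro sum_mono2) auto
  finally show ?thesis using hm by linarith
qed

lemma unif_meas:
  assumes h: "\<phi> \<in> Hom_mu M T \<eta> F \<delta> d p" and pM: "prob_space M" and d: "0 < d"
  shows "\<bar>unif d (\<phi> A) - measure M A\<bar> < \<delta>"
proof -
  interpret prob_space M by (rule pM)
  have hb: "is_bool_hom M d J \<phi>" by (rule Hom_bool[OF h])
  have c1: "\<forall>C\<in>J. C \<subseteq> A \<or> C \<inter> A = {}" using cell_A by blast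
  have c2: "\<forall>C\<in>J. C \<subseteq> space M - A \<or> C \<inter> (space M - A) = {}" using cell_A J_sub by blast
  have u1: "unif d (\<phi> A) < measure M A + \<delta>" using unif_le_meas[OF h pM A_sub c1] .
  have u2: "unif d (\<phi> (space M - A)) < measure M (space M - A) + \<delta>"
    using unif_le_meas[OF h pM _ c2] by blast
  have "\<phi> (space M - A) = {1..d} - \<phi> A" using hb A_alg(1) unfolding is_bool_hom_def by blast
  then have "unif d (\<phi> (space M - A)) = 1 - unif d (\<phi> A)" using unif_compl[OF d] by simp
  moreover have "measure M (space M - A) = 1 - measure M A" using prob_compl A_sets by simp
  ultimately show ?thesis using u1 u2 by linarith
qed

lemma unif_inv:
  assumes h: "\<phi> \<in> Hom_mu M T \<eta> F \<delta> d p" and g: "g \<in> F" and pp: "p g permutes {1..d}"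
  shows "unif d (symdiff (\<phi> A \<inter> {1..d}) (p g ` (\<phi> A \<inter> {1..d}))) < \<delta>"
proof -
  have hb: "is_bool_hom M d J \<phi>" by (rule Hom_bool[OF h])
  have hi: "(\<Sum>B\<in>\<eta>. unif d (symdiff (p g -` \<phi> B \<inter> {1..d}) (\<phi> (T g -` B \<inter> space M)))) < \<delta>"
    using h g unfolding Hom_mu_def by blast
  define \<eta>A where "\<eta>A = {B\<in>\<eta>. B \<subseteq> A}"
  have fin: "finite \<eta>A" unfolding \<eta>A_def using eta_props(1) by simp
  have alg1: "\<eta>A \<subseteq> alg J" unfolding \<eta>A_def using eta_alg by blast
  have hA1: "A = \<Union>\<eta>A"
  proof
    show "A \<subseteq> \<Union>\<eta>A"
    proof
      fix x assume x: "x \<in> A"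
      then obtain B where B: "B \<in> \<eta>" "x \<in> B" using A_sub eta_props(4) by blast
      then have "B \<subseteq> A" using sat[OF B(1)] x by blast
      then show "x \<in> \<Union>\<eta>A" using B unfolding \<eta>A_def by blast
    qed
  qed (auto simp: \<eta>A_def)
  define pre where "pre B = T g -` B \<inter> space M" for B
  have hA2: "pre A = \<Union>(pre ` \<eta>A)" unfolding pre_def by (subst hA1) blast
  have preA: "pre A = A" unfolding pre_def by (rule A_inv[OF g])
  have alg2: "pre ` \<eta>A \<subseteq> alg J" unfolding pre_def \<eta>A_def using pre_alg[OF _ g] by blast
  have e1: "\<phi> A = (\<Union>B\<in>\<eta>A. \<phi> B)" using hom_UN(1)[OF hb fin alg1] hA1 by simp
  have e2: "\<phi> A = (\<Union>B\<in>\<eta>A. \<phi> (pre B))"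
    using hom_UN(1)[OF hb _ alg2] fin hA2 preA by (simp add: image_image)
  define X where "X = p g -` \<phi> A \<inter> {1..d}"
  have "symdiff X (\<phi> A) \<subseteq> (\<Union>B\<in>\<eta>A. symdiff (p g -` \<phi> B \<inter> {1..d}) (\<phi> (pre B)))"
  proof -
    have "X = (\<Union>B\<in>\<eta>A. p g -` \<phi> B \<inter> {1..d})" unfolding X_def by (subst e1) blast
    moreover have "\<phi> A = (\<Union>B\<in>\<eta>A. \<phi> (pre B))" by (rule e2)
    ultimately show ?thesis using symdiff_UN[of "\<lambda>B. p g -` \<phi> B \<inter> {1..d}" \<eta>A "\<lambda>B. \<phi> (pre B)"] by simp
  qed
  then have "unif d (symdiff X (\<phi> A)) \<le> unif d (\<Union>B\<in>\<eta>A. symdiff (p g -` \<phi> B \<inter> {1..d}) (\<phi> (pre B)))"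
    by (rule unif_mono)
  also have "\<dots> \<le> (\<Sum>B\<in>\<eta>A. unif d (symdiff (p g -` \<phi> B \<inter> {1..d}) (\<phi> (pre B))))"
    by (rule unif_UN[OF fin])
  also have "\<dots> \<le> (\<Sum>B\<in>\<eta>. unif d (symdiff (p g -` \<phi> B \<inter> {1..d}) (\<phi> (pre B))))"
    using eta_props(1) unif_nonneg unfolding \<eta>A_def by (intro sum_mono2) auto
  finally have lt: "unif d (symdiff X (\<phi> A)) < \<delta>" using hi unfolding pre_def by linarith
  define P where "P = \<phi> A \<inter> {1..d}"
  define D where "D = symdiff P (p g ` P)"
  have Dsub: "D \<subseteq> {1..d}" unfolding D_def P_def symdiff_def using permutes_image[OF pp] by blast
  have inj: "inj (p g)" by (rule permutes_inj[OF pp])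
  have inimg: "\<And>y. p g y \<in> {1..d} \<longleftrightarrow> y \<in> {1..d}" by (rule permutes_in_image[OF pp])
  have eqs: "symdiff X (\<phi> A) \<inter> {1..d} = p g -` D \<inter> {1..d}"
  proof (rule Set.set_eqI)
    fix y
    show "y \<in> symdiff X (\<phi> A) \<inter> {1..d} \<longleftrightarrow> y \<in> p g -` D \<inter> {1..d}"
    proof (cases "y \<in> {1..d}")
      case True
      have a: "y \<in> X \<longleftrightarrow> p g y \<in> P" unfolding X_def P_def using True inimg by auto
      have b: "y \<in> \<phi> A \<longleftrightarrow> p g y \<in> p g ` P" unfolding P_def using True inj by (auto simp: inj_image_mem_iff)
      show ?thesis using a b True unfolding D_def symdiff_def by auto
    next
      case False
      then show ?thesis by blast
    qed
  qed
  have "unif d D = unif d (symdiff X (\<phi> A))"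
    unfolding unif_def eqs card_perm_preimage[OF pp Dsub] using Dsub by (simp add: Int_absorb2)
  then show ?thesis using lt unfolding D_def P_def by simp
qed

end

lemma diag:
  fixes C :: "'g set" and \<sigma> :: "nat \<Rightarrow> 'g \<Rightarrow> nat \<Rightarrow> nat" and d :: "nat \<Rightarrow> nat" and a :: real
  assumes cC: "countable C" and eC: "e \<in> C" and a: "0 < a" "a < 1"
    and erg: "\<forall>A :: nat \<Rightarrow> nat set. (\<forall>i. A i \<subseteq> {1..d i}) \<longrightarrow>
        (\<forall>g\<in>C. (\<lambda>i. unif (d i) (symdiff (A i) (\<sigma> i g ` A i))) \<longlonglongrightarrow> 0) \<longrightarrow>
        (\<lambda>i. unif (d i) (A i) * (1 - unif (d i) (A i))) \<longlonglongrightarrow> 0"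
    and freq: "\<And>F \<delta> N. finite F \<Longrightarrow> F \<subseteq> C \<Longrightarrow> e \<in> F \<Longrightarrow> \<delta> > 0 \<Longrightarrow>
        \<exists>i\<ge>N. \<exists>P. P \<subseteq> {1..d i} \<and> (\<forall>g\<in>F. unif (d i) (symdiff P (\<sigma> i g ` P)) < \<delta>)
            \<and> \<bar>unif (d i) P - a\<bar> < \<delta>"
  shows False
proof -
  define f where "f = from_nat_into C"
  have "C \<noteq> {}" using eC by blast
  then have rf: "range f = C" unfolding f_def using cC by (rule range_from_nat_into)
  define c where "c = min a (1 - a) / 2"
  have c: "0 < c" "c \<le> a / 2" "c \<le> (1 - a) / 2" unfolding c_def using a by auto
  define Fn where "Fn n = insert e (f ` {..<n})" for n
  define dn where "dn n = c / real (Suc n)" for n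
  have Fn: "finite (Fn n)" "Fn n \<subseteq> C" "e \<in> Fn n" for n unfolding Fn_def using rf eC by auto
  have dn: "0 < dn n" "dn n \<le> c" for n unfolding dn_def using c by (auto simp: field_simps)
  have dnm: "m \<le> n \<Longrightarrow> dn n \<le> dn m" for m n unfolding dn_def using c
    by (intro divide_left_mono) auto
  define Q where "Q n i P \<longleftrightarrow> P \<subseteq> {1..d i} \<and> (\<forall>g\<in>Fn n. unif (d i) (symdiff P (\<sigma> i g ` P)) < dn n)
            \<and> \<bar>unif (d i) P - a\<bar> < dn n" for n i P
  have ex: "\<exists>i\<ge>N. \<exists>P. Q n i P" for n N unfolding Q_def using freq[OF Fn(1-3) dn(1)] by blast
  have "\<exists>idx. \<forall>n. (\<exists>P. Q n (idx n) P) \<and> idx n < idx (Suc n)"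
  proof (rule dependent_nat_choice)
    show "\<exists>x. \<exists>P. Q 0 x P" using ex by blast
    show "\<exists>y. (\<exists>P. Q (Suc n) y P) \<and> x < y" for x n using ex[of "Suc x" "Suc n"] by (auto simp: Suc_le_eq)
  qed
  then obtain idx where idx: "\<And>n. \<exists>P. Q n (idx n) P" "\<And>n. idx n < idx (Suc n)" by blast
  have sm: "strict_mono idx" using idx(2) by (simp add: strict_mono_Suc_iff)
  have inj: "inj idx" using sm by (rule strict_mono_imp_inj_on)
  obtain Ps where Ps: "\<And>n. Q n (idx n) (Ps n)" using idx(1) by metis
  define AS where "AS i = (if i \<in> range idx then Ps (inv_into UNIV idx i) else {})" for i
  have AS_idx: "AS (idx n) = Ps n" for n unfolding AS_def using inj by simp
  have AS_sub: "AS i \<subseteq> {1..d i}" for i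
  proof (cases "i \<in> range idx")
    case True
    then obtain n where "i = idx n" by blast
    then show ?thesis using Ps[of n] AS_idx unfolding Q_def by simp
  qed (simp add: AS_def)
  have conv: "(\<lambda>i. unif (d i) (symdiff (AS i) (\<sigma> i g ` AS i))) \<longlonglongrightarrow> 0" if g: "g \<in> C" for g
  proof (rule LIMSEQ_I)
    fix r :: real assume r: "0 < r"
    obtain k where k: "g = f k" using g rf by blast
    obtain m where m: "c / r < real m" using reals_Archimedean2 by blast
    define n0 where "n0 = max m (Suc k)"
    have "dn n0 < r"
    proof -
      have "real m \<le> real (Suc n0)" unfolding n0_def by simp
      then have "r * real m \<le> r * real (Suc n0)" using r by (intro mult_left_mono) auto
      moreover have "c < r * real m" using m r by (simp add: field_simps)
      ultimately have "c < r * real (Suc n0)" by linarith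
      then show ?thesis unfolding dn_def using r by (simp add: field_simps)
    qed
    show "\<exists>N. \<forall>i\<ge>N. norm (unif (d i) (symdiff (AS i) (\<sigma> i g ` AS i)) - 0) < r"
    proof (intro exI allI impI)
      fix i assume i: "idx n0 \<le> i"
      show "norm (unif (d i) (symdiff (AS i) (\<sigma> i g ` AS i)) - 0) < r"
      proof (cases "i \<in> range idx")
        case True
        then obtain n where n: "i = idx n" by blast
        then have "n0 \<le> n" using i sm by (simp add: strict_mono_less_eq)
        then have gF: "g \<in> Fn n" unfolding Fn_def n0_def k by auto
        have "unif (d i) (symdiff (AS i) (\<sigma> i g ` AS i)) < dn n"
          using Ps[of n] gF n AS_idx unfolding Q_def by auto
        moreover have "dn n \<le> dn n0" using \<open>n0 \<le> n\<close> by (rule dnm)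
        ultimately show ?thesis using \<open>dn n0 < r\<close> unif_nonneg[of "d i"] by simp
      next
        case False
        then have "AS i = {}" unfolding AS_def by simp
        then show ?thesis using r by (simp add: symdiff_def unif_def)
      qed
    qed
  qed
  have lim: "(\<lambda>i. unif (d i) (AS i) * (1 - unif (d i) (AS i))) \<longlonglongrightarrow> 0"
    using erg AS_sub conv by blast
  have lim2: "(\<lambda>n. unif (d (idx n)) (AS (idx n)) * (1 - unif (d (idx n)) (AS (idx n)))) \<longlonglongrightarrow> 0"
    using LIMSEQ_subseq_LIMSEQ[OF lim sm] by (simp add: comp_def)
  have lb: "a / 2 * ((1 - a) / 2) \<le> unif (d (idx n)) (AS (idx n)) * (1 - unif (d (idx n)) (AS (idx n)))" for n
  proof -
    have "\<bar>unif (d (idx n)) (Ps n) - a\<bar> < dn n" using Ps[of n] unfolding Q_def by blast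
    then have u: "a / 2 \<le> unif (d (idx n)) (Ps n)" "(1 - a) / 2 \<le> 1 - unif (d (idx n)) (Ps n)"
      using dn(2)[of n] c by (auto simp: abs_less_iff)
    show ?thesis unfolding AS_idx using a by (intro mult_mono u) (use u in auto)
  qed
  have "a / 2 * ((1 - a) / 2) \<le> 0" using LIMSEQ_le_const[OF lim2] lb by blast
  moreover have "0 < a / 2 * ((1 - a) / 2)" using a by simp
  ultimately show False by linarith
qed

theorem proposition4p17:
  fixes G :: "'g monoid" and M :: "'a::polish_space measure" and T :: "'g \<Rightarrow> 'a \<Rightarrow> 'a"
    and d :: "nat \<Rightarrow> nat" and \<sigma> :: "nat \<Rightarrow> 'g \<Rightarrow> nat \<Rightarrow> nat"
  assumes "group G" and "countable (carrier G)"
    and "ergodic_sofic_approx G d \<sigma>"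
    and "sets M = sets borel" and "prob_space M"
    and "pmp_action G M T"
    and "\<not> ergodic_action G M T"
  shows "sofic_entropy G M T d \<sigma> = -\<infinity>"
proof -
  have Tmeas: "\<And>g. g \<in> carrier G \<Longrightarrow> T g \<in> measurable M M"
    and T1: "\<And>x. x \<in> space M \<Longrightarrow> T \<one>\<^bsub>G\<^esub> x = x"
    using assms(6) unfolding pmp_action_def by auto
  obtain A where A: "A \<in> sets M" "\<And>g. g \<in> carrier G \<Longrightarrow> T g -` A \<inter> space M = A"
    "measure M A \<noteq> 0" "measure M A \<noteq> 1"
    using assms(7) unfolding ergodic_action_def by blast
  interpret prob_space M by (rule assms(5))
  have a: "0 < measure M A" "measure M A < 1"
  proof -
    have h0: "0 \<le> measure M A" by (rule measure_nonneg)
    have h1: "measure M A \<le> 1" by (rule prob_le_1)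
    show "0 < measure M A" using h0 A(3) by linarith
    show "measure M A < 1" using h1 A(4) by linarith
  qed
  have sof: "sofic_approx G d \<sigma>" and erg: "\<forall>A :: nat \<Rightarrow> nat set. (\<forall>i. A i \<subseteq> {1..d i}) \<longrightarrow>
        (\<forall>g\<in>carrier G. (\<lambda>i. unif (d i) (symdiff (A i) (\<sigma> i g ` A i))) \<longlonglongrightarrow> 0) \<longrightarrow>
        (\<lambda>i. unif (d i) (A i) * (1 - unif (d i) (A i))) \<longlonglongrightarrow> 0"
    using conjunct1[OF assms(3)[unfolded ergodic_sofic_approx_def]]
      conjunct2[OF assms(3)[unfolded ergodic_sofic_approx_def]] by auto
  have dpos: "\<And>i. 0 < d i" using conjunct1[OF sof[unfolded sofic_approx_def]] by simp
  have perm: "\<And>i g. g \<in> carrier G \<Longrightarrow> \<sigma> i g permutes {1..d i}"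
    using conjunct1[OF conjunct2[OF sof[unfolded sofic_approx_def]]] by simp
  have one: "\<one>\<^bsub>G\<^esub> \<in> carrier G" using assms(1) by (simp add: group.is_monoid monoid.one_closed)
  have Asub: "A \<subseteq> space M" using A(1) sets.sets_into_space by blast
  show ?thesis
  proof -
    have "sofic_entropy G M T d \<sigma> \<le> -\<infinity>"
      unfolding sofic_entropy_def
    proof (rule SUP_least)
      fix \<xi> assume "\<xi> \<in> {\<xi>. finite_meas_partition M \<xi>}"
      then have fx: "finite_meas_partition M \<xi>" by simp
      then have x: "finite \<xi>" "\<xi> \<subseteq> sets M" "disjoint \<xi>" "\<Union>\<xi> = space M" "{} \<notin> \<xi>"
        unfolding finite_meas_partition_def by auto
      define \<eta> where "\<eta> = ((\<lambda>B. B \<inter> A) ` \<xi> \<union> (\<lambda>B. B - A) ` \<xi>) - {{}}"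
      have fe: "finite_meas_partition M \<eta>"
        unfolding finite_meas_partition_def
      proof (intro conjI)
        show "finite \<eta>" unfolding \<eta>_def using x(1) by simp
        show "\<eta> \<subseteq> sets M" unfolding \<eta>_def using x(2) A(1) by auto
        show "disjoint \<eta>"
          unfolding disjoint_def disjnt_def
        proof (intro ballI impI)
          fix X Y assume X: "X \<in> \<eta>" and Y: "Y \<in> \<eta>" and ne: "X \<noteq> Y"
          obtain B1 where B1: "B1 \<in> \<xi>" "X = B1 \<inter> A \<or> X = B1 - A" using X unfolding \<eta>_def by blast
          obtain B2 where B2: "B2 \<in> \<xi>" "Y = B2 \<inter> A \<or> Y = B2 - A" using Y unfolding \<eta>_def by blast
          show "X \<inter> Y = {}"
          proof (cases "B1 = B2")
            case True
            then show ?thesis using B1 B2 ne by blast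
          next
            case False
            then have "B1 \<inter> B2 = {}" using x(3) B1(1) B2(1) unfolding disjoint_def disjnt_def by blast
            then show ?thesis using B1 B2 by blast
          qed
        qed
        show "\<Union>\<eta> = space M"
        proof
          show "\<Union>\<eta> \<subseteq> space M" unfolding \<eta>_def using x(4) by blast
          show "space M \<subseteq> \<Union>\<eta>"
          proof
            fix z assume "z \<in> space M"
            then obtain B where B: "B \<in> \<xi>" "z \<in> B" using x(4) by blast
            show "z \<in> \<Union>\<eta>"
            proof (cases "z \<in> A")
              case True
              then have "B \<inter> A \<in> \<eta>" "z \<in> B \<inter> A" unfolding \<eta>_def using B by blast+
              then show ?thesis by blast
            next
              case False
              then have "B - A \<in> \<eta>" "z \<in> B - A" unfolding \<eta>_def using B by blast+
              then show ?thesis by blast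
            qed
          qed
        qed
        show "{} \<notin> \<eta>" unfolding \<eta>_def by blast
      qed
      have re: "refines \<eta> \<xi>" unfolding refines_def \<eta>_def by blast
      have satA: "\<And>B. B \<in> \<eta> \<Longrightarrow> B \<subseteq> A \<or> B \<inter> A = {}" unfolding \<eta>_def by blast
      have claim: "\<exists>F \<delta>. finite F \<and> F \<subseteq> carrier G \<and> \<one>\<^bsub>G\<^esub> \<in> F \<and> 0 < \<delta> \<and>
          eventually (\<lambda>i. Hom_mu M T \<eta> F \<delta> (d i) (\<sigma> i) = {}) sequentially"
      proof (rule ccontr)
        assume nc: "\<not> ?thesis"
        show False
        proof (rule diag[OF assms(2) one a erg])
          fix F :: "'g set" and \<delta> :: real and N :: nat
          assume F: "finite F" "F \<subseteq> carrier G" "\<one>\<^bsub>G\<^esub> \<in> F" and \<delta>: "\<delta> > 0"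
          have "\<not> eventually (\<lambda>i. Hom_mu M T \<eta> F \<delta> (d i) (\<sigma> i) = {}) sequentially"
            using nc F \<delta> by blast
          then have "frequently (\<lambda>i. Hom_mu M T \<eta> F \<delta> (d i) (\<sigma> i) \<noteq> {}) sequentially"
            by (simp add: not_eventually)
          then obtain i where i: "i \<ge> N" "Hom_mu M T \<eta> F \<delta> (d i) (\<sigma> i) \<noteq> {}"
            unfolding frequently_sequentially by blast
          then obtain \<phi> where \<phi>: "\<phi> \<in> Hom_mu M T \<eta> F \<delta> (d i) (\<sigma> i)" by blast
          interpret jinv M T \<eta> F A "\<one>\<^bsub>G\<^esub>"
          proof
            show "finite_meas_partition M \<eta>" by (rule fe)
            show "finite F" by (rule F(1))
            show "F \<noteq> {}" using F(3) by blast
            show "\<And>s. s \<in> F \<Longrightarrow> T s \<in> M \<rightarrow>\<^sub>M M" using Tmeas F(2) by blast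
            show "A \<in> sets M" by (rule A(1))
            show "\<And>g. g \<in> F \<Longrightarrow> T g -` A \<inter> space M = A" using A(2) F(2) by blast
            show "\<And>B. B \<in> \<eta> \<Longrightarrow> B \<subseteq> A \<or> B \<inter> A = {}" by (rule satA)
            show "\<one>\<^bsub>G\<^esub> \<in> F" by (rule F(3))
            show "\<And>x. x \<in> space M \<Longrightarrow> T \<one>\<^bsub>G\<^esub> x = x" by (rule T1)
          qed
          have inv: "\<forall>g\<in>F. unif (d i) (symdiff (\<phi> A \<inter> {1..d i}) (\<sigma> i g ` (\<phi> A \<inter> {1..d i}))) < \<delta>"
            using unif_inv[OF \<phi>] perm F(2) by blast
          have mes: "\<bar>unif (d i) (\<phi> A \<inter> {1..d i}) - measure M A\<bar> < \<delta>"
            using unif_meas[OF \<phi> assms(5) dpos] unif_int[of "d i" "\<phi> A"] by simp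
          show "\<exists>i\<ge>N. \<exists>P. P \<subseteq> {1..d i} \<and> (\<forall>g\<in>F. unif (d i) (symdiff P (\<sigma> i g ` P)) < \<delta>)
            \<and> \<bar>unif (d i) P - measure M A\<bar> < \<delta>"
            using i(1) inv mes by blast
        qed
      qed
      then obtain F \<delta> where F: "finite F" "F \<subseteq> carrier G" "\<one>\<^bsub>G\<^esub> \<in> F" and \<delta>: "0 < \<delta>"
        and ev: "eventually (\<lambda>i. Hom_mu M T \<eta> F \<delta> (d i) (\<sigma> i) = {}) sequentially" by blast
      have ev2: "eventually (\<lambda>i. log_rate (d i) (hom_count M T \<xi> \<eta> F \<delta> (d i) (\<sigma> i)) = -\<infinity>) sequentially"
        using ev by eventually_elim (simp add: hom_count_def log_rate_def)
      have ls: "limsup (\<lambda>i. log_rate (d i) (hom_count M T \<xi> \<eta> F \<delta> (d i) (\<sigma> i))) = -\<infinity>"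
      proof -
        have "limsup (\<lambda>i. log_rate (d i) (hom_count M T \<xi> \<eta> F \<delta> (d i) (\<sigma> i))) = limsup (\<lambda>i. -\<infinity>)"
          by (rule Limsup_eq[OF ev2])
        then show ?thesis by (simp add: Limsup_const)
      qed
      have "(INF \<delta>\<in>{0<..}. limsup (\<lambda>i. log_rate (d i) (hom_count M T \<xi> \<eta> F \<delta> (d i) (\<sigma> i)))) \<le> -\<infinity>"
        using \<delta> ls by (intro INF_lower2[of \<delta>]) auto
      then have "(INF F\<in>{F. finite F \<and> F \<subseteq> carrier G \<and> \<one>\<^bsub>G\<^esub> \<in> F}. INF \<delta>\<in>{0<..}.
          limsup (\<lambda>i. log_rate (d i) (hom_count M T \<xi> \<eta> F \<delta> (d i) (\<sigma> i)))) \<le> -\<infinity>"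
        using F by (intro INF_lower2[of F]) auto
      then show "(INF \<eta>\<in>{\<eta>. finite_meas_partition M \<eta> \<and> refines \<eta> \<xi>}.
          INF F\<in>{F. finite F \<and> F \<subseteq> carrier G \<and> \<one>\<^bsub>G\<^esub> \<in> F}. INF \<delta>\<in>{0<..}.
          limsup (\<lambda>i. log_rate (d i) (hom_count M T \<xi> \<eta> F \<delta> (d i) (\<sigma> i)))) \<le> -\<infinity>"
        using fe re by (intro INF_lower2[of \<eta>]) auto
    qed
    then show ?thesis by simp
  qed
qed

end
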